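(* Let $A$ and $B$ be non-coprime nonzero integers, let $g=\gcd(A,B)$, and write $A=ga$, $B=gb$ (so $\gcd(a,b)=1$). Let $L$ be a positive integer, let $\ell=\prod_{p\nmid g}p^{\nu_p(L)}$ and $\gamma(L)=\max_{p\mid g}\left\lceil \nu_p(L)/\nu_p(g)\right\rceil$. Then the following are equivalent: (i) there exists a positive integer $K$ with $L\mid(A^K+B^K)$; (ii) there exists a positive integer $\kappa\ge\gamma(L)$ with $\ell\mid(a^{\kappa}+b^{\kappa})$; (iii) there exists a positive integer $k$ with $\ell\mid(a^k+b^k)$.
   Context: $\nu_p(n)$ denotes the $p$-adic valuation of a nonzero integer $n$; products and maxima indexed by $p$ range over primes. $\lceil x\rceil$ is the least integer $\ge x$. *)

theory Defs
  imports "HOL-Computational_Algebra.Computational_Algebra"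
begin

definition ell_part :: "int \<Rightarrow> int \<Rightarrow> int" where
  "ell_part L g = (\<Prod>p\<in>{p. prime p \<and> p dvd L \<and> \<not> p dvd g}. p ^ multiplicity p L)"

definition gamma_bound :: "int \<Rightarrow> int \<Rightarrow> int" where
  "gamma_bound L g = Max {\<lceil>real (multiplicity p L) / real (multiplicity p g)\<rceil> | p. prime p \<and> p dvd g}"

end

theory Submission
  imports Defs
begin

lemma odd_pow_sum_dvd:
  fixes x y :: int
  assumes "odd n"
  shows "x + y dvd x ^ n + y ^ n"
proof -
  have "x mod (x + y) = (- y) mod (x + y)"
    by (simp add: mod_eq_dvd_iff)
  hence "(x mod (x + y)) ^ n mod (x + y) = ((- y) mod (x + y)) ^ n mod (x + y)"
    by simp
  hence "x ^ n mod (x + y) = (- y) ^ n mod (x + y)"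
    by (simp only: power_mod)
  also have "(- y) ^ n = - (y ^ n)" using assms by simp
  finally have "(x ^ n - (- (y ^ n))) mod (x + y) = 0"
    by (simp add: mod_eq_dvd_iff)
  thus ?thesis by (simp add: mod_eq_0_iff_dvd)
qed

lemma ell_facts:
  fixes L g :: int
  assumes "L > 0"
  defines "S \<equiv> {p. prime p \<and> p dvd L \<and> \<not> p dvd g}"
  shows "finite S" "ell_part L g \<noteq> 0"
    "\<And>q. prime q \<Longrightarrow> multiplicity q (ell_part L g) = (if q \<in> S then multiplicity q L else 0)"
proof -
  have "S \<subseteq> {p. prime p \<and> p dvd L}" unfolding S_def by auto
  thus fS: "finite S" by (rule finite_subset[OF _ finite_prime_divisors]) (use assms in auto)
  show "ell_part L g \<noteq> 0" unfolding ell_part_def S_def[symmetric]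
    using fS by (auto simp: S_def)
  fix q :: int assume "prime q"
  thus "multiplicity q (ell_part L g) = (if q \<in> S then multiplicity q L else 0)"
    unfolding ell_part_def S_def[symmetric]
    by (subst multiplicity_prod_prime_powers) (use fS in \<open>auto simp: S_def\<close>)
qed

lemma mult_g_le:
  fixes L g :: int and p :: int and k :: nat
  assumes "g \<noteq> 0" "prime p" "p dvd g" "int k \<ge> gamma_bound L g"
  shows "multiplicity p L \<le> k * multiplicity p g"
proof -
  have fin: "finite {p. prime p \<and> p dvd g}" using finite_prime_divisors[OF assms(1)] .
  let ?T = "{\<lceil>real (multiplicity p L) / real (multiplicity p g)\<rceil> | p. prime p \<and> p dvd g}"
  have "?T = (\<lambda>p. \<lceil>real (multiplicity p L) / real (multiplicity p g)\<rceil>) ` {p. prime p \<and> p dvd g}"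
    by auto
  hence finT: "finite ?T" using fin by simp
  have "\<lceil>real (multiplicity p L) / real (multiplicity p g)\<rceil> \<in> ?T" using assms by auto
  hence "\<lceil>real (multiplicity p L) / real (multiplicity p g)\<rceil> \<le> gamma_bound L g"
    unfolding gamma_bound_def using finT by (rule Max_ge[rotated])
  hence c: "\<lceil>real (multiplicity p L) / real (multiplicity p g)\<rceil> \<le> int k" using assms(4) by linarith
  have npos: "multiplicity p g > 0"
    using prime_multiplicity_gt_zero_iff[OF prime_imp_prime_elem[OF assms(2)] assms(1)] assms(3) by simp
  have "real (multiplicity p L) / real (multiplicity p g) \<le> real k"
    using c by (simp add: ceiling_le_iff)
  hence "real (multiplicity p L) \<le> real k * real (multiplicity p g)"
    using npos by (simp add: divide_le_eq)
  hence "real (multiplicity p L) \<le> real (k * multiplicity p g)" by simp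
  thus ?thesis by (simp only: of_nat_le_iff)
qed

theorem lemma3p3:
  fixes A B a b g L :: int
  assumes "A \<noteq> 0" and "B \<noteq> 0" and "\<not> coprime A B"
    and "g = gcd A B" and "A = g * a" and "B = g * b"
    and "L > 0"
  shows "((\<exists>K::nat. K > 0 \<and> L dvd (A ^ K + B ^ K)) \<longleftrightarrow>
           (\<exists>\<kappa>::nat. \<kappa> > 0 \<and> int \<kappa> \<ge> gamma_bound L g \<and> ell_part L g dvd (a ^ \<kappa> + b ^ \<kappa>)))
       \<and> ((\<exists>\<kappa>::nat. \<kappa> > 0 \<and> int \<kappa> \<ge> gamma_bound L g \<and> ell_part L g dvd (a ^ \<kappa> + b ^ \<kappa>)) \<longleftrightarrow>
           (\<exists>k::nat. k > 0 \<and> ell_part L g dvd (a ^ k + b ^ k)))"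
proof -
  define S where "S = {p. prime p \<and> p dvd L \<and> \<not> p dvd g}"
  have g0: "g \<noteq> 0" using assms(1,4) by simp
  have L0: "L \<noteq> 0" using assms(7) by simp
  note ef = ell_facts[OF assms(7), where g=g, folded S_def]
  have AB: "A ^ K + B ^ K = g ^ K * (a ^ K + b ^ K)" for K :: nat
    using assms(5,6) by (simp add: power_mult_distrib distrib_left)
  have i_iii: "ell_part L g dvd (a ^ K + b ^ K)" if "L dvd (A ^ K + B ^ K)" for K :: nat
  proof (cases "a ^ K + b ^ K = 0")
    case True thus ?thesis by simp
  next
    case False
    have nz: "g ^ K * (a ^ K + b ^ K) \<noteq> 0" using False g0 by simp
    show ?thesis
    proof (rule multiplicity_le_imp_dvd[OF ef(2)])
      fix q :: int assume q: "prime q"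
      show "multiplicity q (ell_part L g) \<le> multiplicity q (a ^ K + b ^ K)"
      proof (cases "q \<in> S")
        case True
        hence "\<not> q dvd g" by (simp add: S_def)
        hence m0: "multiplicity q g = 0" by (rule not_dvd_imp_multiplicity_0)
        have "multiplicity q L \<le> multiplicity q (g ^ K * (a ^ K + b ^ K))"
          using dvd_imp_multiplicity_le[OF _ nz] that AB by metis
        also have "\<dots> = multiplicity q (a ^ K + b ^ K)"
          using prime_elem_multiplicity_mult_distrib[OF prime_imp_prime_elem[OF q] _ False, of "g ^ K"]
            prime_elem_multiplicity_power_distrib[OF prime_imp_prime_elem[OF q] g0, of K] g0 m0
          by simp
        finally show ?thesis using ef(3)[OF q] True by simp
      qed (use ef(3)[OF q] in simp)
    qed
  qed
  have iii_ii: "\<exists>\<kappa>::nat. \<kappa> > 0 \<and> int \<kappa> \<ge> gamma_bound L g \<and> ell_part L g dvd (a ^ \<kappa> + b ^ \<kappa>)"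
    if "k > 0" "ell_part L g dvd (a ^ k + b ^ k)" for k :: nat
  proof -
    define N where "N = nat (gamma_bound L g)"
    define \<kappa> where "\<kappa> = k * (2 * N + 1)"
    have "a ^ k + b ^ k dvd (a ^ k) ^ (2 * N + 1) + (b ^ k) ^ (2 * N + 1)"
      by (rule odd_pow_sum_dvd) simp
    hence "ell_part L g dvd (a ^ \<kappa> + b ^ \<kappa>)"
      using that(2) unfolding \<kappa>_def power_mult by (rule dvd_trans[rotated])
    moreover have "\<kappa> \<ge> 2 * N + 1" unfolding \<kappa>_def using that(1) mult_le_mono1[of 1 k "2 * N + 1"] by simp
    hence "int \<kappa> \<ge> gamma_bound L g" unfolding N_def by linarith
    moreover have "\<kappa> > 0" using that(1) by (simp add: \<kappa>_def)
    ultimately show ?thesis by blast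
  qed
  have ii_i: "L dvd (A ^ K + B ^ K)"
    if "int K \<ge> gamma_bound L g" "ell_part L g dvd (a ^ K + b ^ K)" for K :: nat
  proof (cases "a ^ K + b ^ K = 0")
    case True thus ?thesis using AB by simp
  next
    case False
    show ?thesis unfolding AB
    proof (rule multiplicity_le_imp_dvd[OF L0])
      fix p :: int assume p: "prime p"
      have eq: "multiplicity p (g ^ K * (a ^ K + b ^ K)) = K * multiplicity p g + multiplicity p (a ^ K + b ^ K)"
        using prime_elem_multiplicity_mult_distrib[OF prime_imp_prime_elem[OF p] _ False, of "g ^ K"]
            prime_elem_multiplicity_power_distrib[OF prime_imp_prime_elem[OF p] g0, of K] g0
        by simp
      show "multiplicity p L \<le> multiplicity p (g ^ K * (a ^ K + b ^ K))"
      proof (cases "p dvd g")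
        case True
        thus ?thesis using mult_g_le[OF g0 p True that(1)] eq by simp
      next
        case nd: False
        show ?thesis
        proof (cases "p dvd L")
          case True
          hence "p \<in> S" using nd p by (simp add: S_def)
          hence "multiplicity p L = multiplicity p (ell_part L g)" using ef(3)[OF p] by simp
          also have "\<dots> \<le> multiplicity p (a ^ K + b ^ K)"
            by (rule dvd_imp_multiplicity_le[OF that(2) False])
          finally show ?thesis using eq by simp
        qed (simp add: not_dvd_imp_multiplicity_0)
      qed
    qed
  qed
  show ?thesis
    using i_iii iii_ii ii_i by blast
qed

end
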